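(* Let $G$ be the cycle on $n\ge 3$ vertices. Then $\mathcal{R}(G)=\frac{n(n-1)}{n^2-2n+2}$ if $n$ is even, and $\mathcal{R}(G)=\frac{n}{n-1}$ if $n$ is odd.
   Context: All graphs are finite, simple and connected, with at least two vertices; $d(u,v)$ denotes the shortest-path distance. $V_p$ denotes the set of all unordered pairs $(u,v)$ of distinct vertices. A vertex $x$ resolves the pair $(u,v)$ if $d(x,u)\neq d(x,v)$. For $(u,v)\in V_p$, $R(u,v)$ is the set of all vertices resolving $(u,v)$ (it always contains $u$ and $v$). The resolving share of a vertex $w$ for $(u,v)$ is $r_w(u,v)=\frac{1}{|R(u,v)|}$ if $w$ resolves $u$ and $v$, and $r_w(u,v)=0$ otherwise. For a vertex $w$, $R(w)$ is the set of pairs in $V_p$ resolved by $w$. The average resolving share of $w$ is $ar_w(G)=\frac{1}{|R(w)|}\sum_{(u,v)\in R(w)} r_w(u,v)$, and the resolving topological index of $G$ is $\mathcal{R}(G)=\sum_{w\in V(G)} ar_w(G)$. *)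

theory Defs
  imports Main Complex_Main
begin

definition is_walk :: "'a set \<Rightarrow> ('a \<Rightarrow> 'a \<Rightarrow> bool) \<Rightarrow> 'a list \<Rightarrow> bool" where
  "is_walk V E p \<longleftrightarrow> p \<noteq> [] \<and> set p \<subseteq> V \<and> (\<forall>i. Suc i < length p \<longrightarrow> E (p ! i) (p ! Suc i))"

definition gdist :: "'a set \<Rightarrow> ('a \<Rightarrow> 'a \<Rightarrow> bool) \<Rightarrow> 'a \<Rightarrow> 'a \<Rightarrow> nat" where
  "gdist V E u v = (LEAST k. \<exists>p. is_walk V E p \<and> hd p = u \<and> last p = v \<and> length p = Suc k)"

definition Vp :: "'a set \<Rightarrow> 'a set set" where
  "Vp V = {P. P \<subseteq> V \<and> card P = 2}"

definition resolves :: "'a set \<Rightarrow> ('a \<Rightarrow> 'a \<Rightarrow> bool) \<Rightarrow> 'a \<Rightarrow> 'a \<Rightarrow> 'a \<Rightarrow> bool" where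
  "resolves V E x u v \<longleftrightarrow> gdist V E x u \<noteq> gdist V E x v"

definition resolving_set :: "'a set \<Rightarrow> ('a \<Rightarrow> 'a \<Rightarrow> bool) \<Rightarrow> 'a \<Rightarrow> 'a \<Rightarrow> 'a set" where
  "resolving_set V E u v = {x \<in> V. resolves V E x u v}"

definition resolving_share :: "'a set \<Rightarrow> ('a \<Rightarrow> 'a \<Rightarrow> bool) \<Rightarrow> 'a \<Rightarrow> 'a \<Rightarrow> 'a \<Rightarrow> real" where
  "resolving_share V E w u v =
     (if resolves V E w u v then 1 / real (card (resolving_set V E u v)) else 0)"

definition resolved_pairs :: "'a set \<Rightarrow> ('a \<Rightarrow> 'a \<Rightarrow> bool) \<Rightarrow> 'a \<Rightarrow> 'a set set" where
  "resolved_pairs V E w = {P \<in> Vp V. \<exists>u v. P = {u, v} \<and> resolves V E w u v}"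

definition avg_resolving_share :: "'a set \<Rightarrow> ('a \<Rightarrow> 'a \<Rightarrow> bool) \<Rightarrow> 'a \<Rightarrow> real" where
  "avg_resolving_share V E w =
     (1 / real (card (resolved_pairs V E w))) *
     (\<Sum>P\<in>resolved_pairs V E w. (THE r. \<exists>u v. P = {u, v} \<and> r = resolving_share V E w u v))"

definition resolving_index :: "'a set \<Rightarrow> ('a \<Rightarrow> 'a \<Rightarrow> bool) \<Rightarrow> real" where
  "resolving_index V E = (\<Sum>w\<in>V. avg_resolving_share V E w)"

definition cycle_adj :: "nat \<Rightarrow> nat \<Rightarrow> nat \<Rightarrow> bool" where
  "cycle_adj n i j \<longleftrightarrow> i < n \<and> j < n \<and> (j = (i + 1) mod n \<or> i = (j + 1) mod n)"

end

theory Submission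
  imports Defs
begin


definition cf :: "nat \<Rightarrow> int \<Rightarrow> int" where
  "cf n a = min (a mod int n) ((- a) mod int n)"

lemma cf_cong: "a mod int n = b mod int n \<Longrightarrow> cf n a = cf n b"
  unfolding cf_def by (metis mod_minus_cong)

lemma cf_neg: "cf n (-a) = cf n a" unfolding cf_def by (simp add: min.commute)

lemma cf_nonneg: "n > 0 \<Longrightarrow> 0 \<le> cf n a" unfolding cf_def by simp

lemma cf_alt: "n > 0 \<Longrightarrow> cf n a = (if a mod int n = 0 then 0 else min (a mod int n) (int n - a mod int n))"
  unfolding cf_def by (simp add: zmod_zminus1_eq_if)

lemma mod_lt2: "0 \<le> (t::int) \<Longrightarrow> t < 2 * m \<Longrightarrow> t mod m = (if t < m then t else t - m)"
proof (cases "t < m")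
  case True
  assume "0 \<le> t" then show ?thesis using True by simp
next
  case False
  assume a: "0 \<le> t" "t < 2*m"
  have "t mod m = (t - m) mod m" by (simp add: mod_diff_right_eq[symmetric] )
  also have "\<dots> = t - m" using a False by (intro mod_pos_pos_trivial) auto
  finally show ?thesis using False by simp
qed

lemma cf_suc: "n > 0 \<Longrightarrow> cf n (a + 1) \<le> cf n a + 1"
proof -
  assume n: "n > 0"
  define r where "r = a mod int n"
  have r: "0 \<le> r" "r < int n" using n by (auto simp: r_def)
  have "(a+1) mod int n = (r+1) mod int n" by (simp add: r_def mod_add_left_eq)
  also have "\<dots> = (if r + 1 < int n then r + 1 else r + 1 - int n)"
    using r by (intro mod_lt2) auto
  finally have e: "(a+1) mod int n = (if r + 1 < int n then r + 1 else r + 1 - int n)" .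
  show ?thesis using cf_alt[OF n, of a] cf_alt[OF n, of "a+1"] r e
    unfolding r_def[symmetric] by auto
qed

lemma cf_pred: "n > 0 \<Longrightarrow> cf n (a - 1) \<le> cf n a + 1"
proof -
  assume n: "n > 0"
  have "cf n (a - 1) = cf n (-a + 1)" using cf_neg[of n "a - 1"] by simp
  also have "\<dots> \<le> cf n (-a) + 1" by (rule cf_suc[OF n])
  finally show ?thesis by (simp add: cf_neg)
qed

lemma walk_lb:
  "is_walk {0..<n} (cycle_adj n) p \<Longrightarrow> n > 0 \<Longrightarrow>
     cf n (int (last p) - int (hd p)) \<le> int (length p) - 1"
proof (induction p)
  case Nil then show ?case by (simp add: is_walk_def)
next
  case (Cons a q)
  show ?case
  proof (cases "q = []")
    case True then show ?thesis by (simp add: cf_def)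
  next
    case False
    have wq: "is_walk {0..<n} (cycle_adj n) q"
      using Cons.prems(1) False unfolding is_walk_def
      by (auto simp del: nth_Cons_Suc)
    have adj: "cycle_adj n a (hd q)"
      using Cons.prems(1) False unfolding is_walk_def
      by (metis hd_conv_nth length_Cons length_greater_0_conv lessI nth_Cons_0 nth_Cons_Suc Suc_less_eq)
    have IH: "cf n (int (last q) - int (hd q)) \<le> int (length q) - 1"
      using Cons.IH[OF wq Cons.prems(2)] .
    define L where "L = int (last q)"
    define c where "c = hd q"
    have "cf n (L - int a) \<le> cf n (L - int c) + 1"
    proof -
      from adj have "c = (a + 1) mod n \<or> a = (c + 1) mod n" unfolding cycle_adj_def c_def by auto
      then show ?thesis
      proof
        assume h: "c = (a + 1) mod n"
        have "int c = (int a + 1) mod int n" using h by (simp add: of_nat_mod add.commute)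
        then have "((L + 1) - int c) mod int n = ((L + 1) - (int a + 1)) mod int n"
          by (simp only: mod_diff_right_eq)
        moreover have "(L - int c) + 1 = (L + 1) - int c" "(L + 1) - (int a + 1) = L - int a" by simp_all
        ultimately have "(L - int a) mod int n = ((L - int c) + 1) mod int n" by (metis add_diff_eq diff_add_eq)
        then have "cf n (L - int a) = cf n ((L - int c) + 1)" by (rule cf_cong)
        then show ?thesis using cf_suc[OF Cons.prems(2)] by simp
      next
        assume h: "a = (c + 1) mod n"
        have "int a = (int c + 1) mod int n" using h by (simp add: of_nat_mod add.commute)
        then have "(L - int a) mod int n = (L - (int c + 1)) mod int n"
          by (simp only: mod_diff_right_eq)
        moreover have "L - (int c + 1) = (L - int c) - 1" by simp
        ultimately have "(L - int a) mod int n = ((L - int c) - 1) mod int n" by simp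
        then have "cf n (L - int a) = cf n ((L - int c) - 1)" by (rule cf_cong)
        then show ?thesis using cf_pred[OF Cons.prems(2)] by simp
      qed
    qed
    then show ?thesis using IH False unfolding L_def c_def by simp
  qed
qed



lemma last_map_upt: "last (map f [0..<Suc k]) = f k"
  by (simp add: last_map)

lemma walk_up:
  assumes "n > 0" "u < n"
  shows "is_walk {0..<n} (cycle_adj n) (map (\<lambda>i. (u + i) mod n) [0..<Suc k])"
  unfolding is_walk_def cycle_adj_def using assms
  by (auto simp: mod_Suc_eq simp del: upt_Suc)

lemma is_walk_mapI:
  assumes "\<And>i. i \<le> k \<Longrightarrow> f i < n" "\<And>i. i < k \<Longrightarrow> cycle_adj n (f i) (f (Suc i))"
  shows "is_walk {0..<n} (cycle_adj n) (map f [0..<Suc k])"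
  unfolding is_walk_def using assms
  by (auto simp del: upt_Suc simp: nth_append less_Suc_eq_le)

lemma walk_down:
  assumes "n > 0" "u < n"
  shows "is_walk {0..<n} (cycle_adj n) (map (\<lambda>i. nat ((int u - int i) mod int n)) [0..<Suc k])"
proof (rule is_walk_mapI)
  fix i
  show "nat ((int u - int i) mod int n) < n" using assms by (simp add: nat_less_iff)
next
  fix i
  define b where "b = nat ((int u - int (Suc i)) mod int n)"
  have "int ((b + 1) mod n) = ((int u - int (Suc i)) mod int n + 1) mod int n"
    using assms by (simp add: b_def of_nat_mod add.commute)
  also have "\<dots> = ((int u - int (Suc i)) + 1) mod int n" by (simp add: mod_add_left_eq)
  also have "\<dots> = (int u - int i) mod int n" by simp
  finally have "nat ((int u - int i) mod int n) = (b + 1) mod n"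
    by (metis nat_int)
  then show "cycle_adj n (nat ((int u - int i) mod int n)) (nat ((int u - int (Suc i)) mod int n))"
    unfolding cycle_adj_def b_def using assms by (simp add: nat_less_iff)
qed

lemma gdist_cycle:
  assumes n: "n > 0" and u: "u < n" and v: "v < n"
  shows "gdist {0..<n} (cycle_adj n) u v = nat (cf n (int v - int u))"
  unfolding gdist_def
proof (rule Least_equality)
  show "\<exists>p. is_walk {0..<n} (cycle_adj n) p \<and> hd p = u \<and> last p = v \<and>
        length p = Suc (nat (cf n (int v - int u)))"
  proof (cases "(int v - int u) mod int n \<le> (int u - int v) mod int n")
    case True
    define k where "k = nat ((int v - int u) mod int n)"
    have ck: "nat (cf n (int v - int u)) = k" using True unfolding k_def cf_def by simp
    have "int ((u + k) mod n) = (int u + (int v - int u) mod int n) mod int n"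
      using n by (simp add: k_def of_nat_mod)
    also have "\<dots> = int v" using v by (simp add: mod_add_right_eq)
    finally have l: "(u + k) mod n = v" by simp
    show ?thesis
      by (rule exI[of _ "map (\<lambda>i. (u + i) mod n) [0..<Suc k]"])
         (use walk_up[OF n u, of k] u l ck in \<open>simp del: upt_Suc add: hd_map last_map_upt\<close>)
  next
    case False
    define k where "k = nat ((int u - int v) mod int n)"
    have ck: "nat (cf n (int v - int u)) = k" using False unfolding k_def cf_def by simp
    have "(int u - int k) mod int n = (int u - (int u - int v) mod int n) mod int n"
      using n by (simp add: k_def)
    also have "\<dots> = int v" using v by (simp add: mod_diff_right_eq)
    finally have l: "nat ((int u - int k) mod int n) = v" by simp
    show ?thesis
      by (rule exI[of _ "map (\<lambda>i. nat ((int u - int i) mod int n)) [0..<Suc k]"])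
         (use walk_down[OF n u, of k] u l ck in \<open>simp del: upt_Suc add: hd_map last_map_upt\<close>)
  qed
next
  fix y assume "\<exists>p. is_walk {0..<n} (cycle_adj n) p \<and> hd p = u \<and> last p = v \<and> length p = Suc y"
  then obtain p where "is_walk {0..<n} (cycle_adj n) p" "hd p = u" "last p = v" "length p = Suc y" by blast
  then show "nat (cf n (int v - int u)) \<le> y" using walk_lb[of n p] n by simp
qed



lemma cf_eq_iff:
  assumes n: "n > 0" and x: "x < n" and u: "u < n" and v: "v < n"
  shows "cf n (int u - int x) = cf n (int v - int x) \<longleftrightarrow> (u = v \<or> int n dvd (int u + int v - 2 * int x))"
proof -
  define r where "r = (int u - int x) mod int n"
  define s where "s = (int v - int x) mod int n"
  have r: "0 \<le> r" "r < int n" and s: "0 \<le> s" "s < int n" using n by (auto simp: r_def s_def)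
  have "cf n (int u - int x) = cf n (int v - int x) \<longleftrightarrow> (r = s \<or> r + s = int n)"
    using cf_alt[OF n, of "int u - int x"] cf_alt[OF n, of "int v - int x"] r s
    unfolding r_def[symmetric] s_def[symmetric] by auto
  moreover have "r = s \<longleftrightarrow> u = v"
  proof
    assume "r = s"
    then have "((int u - int x) + int x) mod int n = ((int v - int x) + int x) mod int n"
      unfolding r_def s_def by (metis mod_add_left_eq)
    then show "u = v" using u v by simp
  qed (simp add: r_def s_def)
  moreover have "(int u + int v - 2 * int x) mod int n = (r + s) mod int n"
  proof -
    have "int u + int v - 2 * int x = (int u - int x) + (int v - int x)" by simp
    then show ?thesis unfolding r_def s_def by (metis mod_add_eq)
  qed
  moreover have "(r + s) mod int n = (if r + s < int n then r + s else r + s - int n)"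
    using r s by (intro mod_lt2) auto
  ultimately show ?thesis using r s by (auto simp: dvd_eq_mod_eq_0)
qed

lemma resolves_cycle:
  assumes n: "n > 0" and x: "x < n" and u: "u < n" and v: "v < n"
  shows "resolves {0..<n} (cycle_adj n) x u v \<longleftrightarrow> u \<noteq> v \<and> \<not> int n dvd (int u + int v - 2 * int x)"
proof -
  have "resolves {0..<n} (cycle_adj n) x u v \<longleftrightarrow> cf n (int u - int x) \<noteq> cf n (int v - int x)"
    unfolding resolves_def using gdist_cycle[OF n x u] gdist_cycle[OF n x v] cf_nonneg[OF n]
    by (metis eq_nat_nat_iff)
  then show ?thesis using cf_eq_iff[OF assms] by blast
qed



lemma dvd_diff_eq:
  assumes "x < n" "y < n" "int n dvd (int x - int y)" shows "x = y"
proof -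
  have "int x mod int n = int y mod int n" using assms(3) by (simp add: mod_eq_dvd_iff)
  then show ?thesis using assms(1,2) by simp
qed

lemma card_odd_sol:
  assumes "odd n"
  shows "card {x. x < n \<and> int n dvd (a - 2 * int x)} = 1"
proof -
  have n: "n > 0" using assms by (cases n) auto
  define x0 where "x0 = nat ((a * ((int n + 1) div 2)) mod int n)"
  have x0n: "x0 < n" using n by (simp add: x0_def nat_less_iff)
  have ix0: "int x0 = (a * ((int n + 1) div 2)) mod int n" using n by (simp add: x0_def)
  define k where "k = (int n + 1) div 2"
  have ev: "even (int n + 1)" using assms by simp
  have h2: "2 * k = int n + 1" unfolding k_def by (rule dvd_mult_div_cancel[OF ev])
  have ix0': "int x0 = (a * k) mod int n" using ix0 unfolding k_def .
  have "int n dvd (a - 2 * int x0)"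
  proof -
    have "int n dvd (a * k - (a * k) mod int n)" by (simp add: minus_mod_eq_mult_div)
    then have "int n dvd 2 * (a * k - (a * k) mod int n)" by (rule dvd_mult)
    moreover have "2 * (a * k - (a * k) mod int n) = a * (2 * k) - 2 * int x0"
      unfolding ix0' by (simp add: algebra_simps)
    moreover have "a * (2 * k) = a * int n + a" unfolding h2 by (simp add: algebra_simps)
    ultimately have "int n dvd (a * int n + a - 2 * int x0)" by simp
    then have "int n dvd (a * int n + a - 2 * int x0) - a * int n"
      by (rule dvd_diff) simp
    moreover have "(a * int n + a - 2 * int x0) - a * int n = a - 2 * int x0" by simp
    ultimately show ?thesis by metis
  qed
  have "{x. x < n \<and> int n dvd (a - 2 * int x)} = {x0}"
  proof (intro set_eqI iffI)
    fix x assume "x \<in> {x. x < n \<and> int n dvd (a - 2 * int x)}"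
    then have x: "x < n" "int n dvd (a - 2 * int x)" by auto
    have "int n dvd (a - 2 * int x0) - (a - 2 * int x)" using x(2) \<open>int n dvd (a - 2 * int x0)\<close>
      by (rule dvd_diff[rotated])
    then have "int n dvd 2 * (int x - int x0)" by (simp add: algebra_simps)
    then have "int n dvd (int x - int x0)"
      using coprime_dvd_mult_right_iff[of "int n" 2 "int x - int x0"] assms by simp
    then show "x \<in> {x0}" using dvd_diff_eq[OF x(1) x0n] by simp
  qed (use x0n \<open>int n dvd (a - 2 * int x0)\<close> in auto)
  then show ?thesis by simp
qed

lemma card_unique_v:
  assumes n: "n > 0"
  shows "card {v. v < n \<and> int n dvd (b + int v)} = 1"
proof -
  define v0 where "v0 = nat ((- b) mod int n)"
  have v0n: "v0 < n" using n by (simp add: v0_def nat_less_iff)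
  have iv: "int v0 = (- b) mod int n" using n by (simp add: v0_def)
  have "((- b) mod int n) mod int n = (-b) mod int n" by simp
  then have "int n dvd ((-b) mod int n - (-b))" by (simp only: mod_eq_dvd_iff)
  moreover have "(-b) mod int n - (-b) = b + int v0" unfolding iv by simp
  ultimately have d0: "int n dvd (b + int v0)" by metis
  have "{v. v < n \<and> int n dvd (b + int v)} = {v0}"
  proof (intro set_eqI iffI)
    fix v assume "v \<in> {v. v < n \<and> int n dvd (b + int v)}"
    then have v: "v < n" "int n dvd (b + int v)" by auto
    have "int n dvd (b + int v) - (b + int v0)" using v(2) d0 by (rule dvd_diff)
    then have "int n dvd (int v - int v0)" by simp
    then show "v \<in> {v0}" using dvd_diff_eq[OF v(1) v0n] by simp
  qed (use v0n d0 in auto)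
  then show ?thesis by simp
qed

lemma even_sol_set:
  assumes n: "n = 2 * h" "h > 0"
  shows "{x. x < n \<and> int n dvd (2 * int m - 2 * int x)} = {m mod h, m mod h + h}"
proof -
  have iff: "int n dvd (2 * int m - 2 * int x) \<longleftrightarrow> m mod h = x mod h" for x
  proof -
    have "int n dvd (2 * int m - 2 * int x) \<longleftrightarrow> 2 * int h dvd 2 * (int m - int x)"
      using n by (simp add: algebra_simps)
    also have "\<dots> \<longleftrightarrow> int h dvd (int m - int x)" by (metis dvd_mult_cancel_left zero_neq_numeral)
    also have "\<dots> \<longleftrightarrow> int m mod int h = int x mod int h" by (simp add: mod_eq_dvd_iff)
    also have "\<dots> \<longleftrightarrow> m mod h = x mod h" by (simp flip: of_nat_mod)
    finally show ?thesis .
  qed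
  show ?thesis
  proof (intro set_eqI iffI)
    fix x assume "x \<in> {x. x < n \<and> int n dvd (2 * int m - 2 * int x)}"
    then have x: "x < 2 * h" "m mod h = x mod h" using iff n by auto
    have e: "x = x div h * h + x mod h" by simp
    have "x div h < 2" using x(1) n by (simp add: div_less_iff_less_mult mult.commute)
    then have "x div h = 0 \<or> x div h = 1" by linarith
    then have "x = x mod h \<or> x = x mod h + h"
    proof
      assume "x div h = 0" then show ?thesis using e by simp
    next
      assume "x div h = 1" then show ?thesis using e by simp
    qed
    then show "x \<in> {m mod h, m mod h + h}" using x(2) by auto
  next
    fix x assume "x \<in> {m mod h, m mod h + h}"
    then have "x = m mod h \<or> x = m mod h + h" by blast
    moreover have "m mod h < h" using \<open>h > 0\<close> by simp
    ultimately have "x < n" "m mod h = x mod h" using n(1) by auto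
    then show "x \<in> {x. x < n \<and> int n dvd (2 * int m - 2 * int x)}"
      using iff[of x] by blast
  qed
qed

lemma card_even_sol:
  assumes n: "n = 2 * h" "h > 0"
  shows "card {x. x < n \<and> int n dvd (2 * int m - 2 * int x)} = 2"
proof -
  have "m mod h \<noteq> m mod h + h" using assms by simp
  then show ?thesis unfolding even_sol_set[OF assms, of m] by simp
qed

lemma no_odd_sol:
  assumes "even n" "odd a"
  shows "{x. x < n \<and> int n dvd (a - 2 * int x)} = {}"
proof -
  have "\<not> int n dvd (a - 2 * int x)" for x
  proof
    assume "int n dvd (a - 2 * int x)"
    moreover have "2 dvd int n" using assms(1) by simp
    ultimately have "2 dvd (a - 2 * int x)" by (rule dvd_trans[rotated])
    then show False using assms(2) by simp
  qed
  then show ?thesis by auto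
qed

lemma card_evens: "card {v. v < 2 * h \<and> even v} = h"
proof -
  have "{v. v < 2 * h \<and> even v} = (\<lambda>k. 2 * k) ` {..<h}" by (auto elim!: evenE)
  then show ?thesis by (simp add: card_image inj_on_def)
qed

lemma card_odds: "card {v. v < 2 * h \<and> odd v} = h"
proof -
  have "{v. v < 2 * h \<and> odd v} = (\<lambda>k. 2 * k + 1) ` {..<h}" by (auto elim!: oddE)
  then show ?thesis by (simp add: card_image inj_on_def)
qed



lemma pairs_sum:
  fixes g :: "'a \<Rightarrow> 'a \<Rightarrow> real"
  assumes fin: "finite V" and symR: "\<And>u v. R u v = R v u" and symg: "\<And>u v. g u v = g v u"
  shows "(\<Sum>x\<in>{(u,v). u\<in>V \<and> v\<in>V \<and> u\<noteq>v \<and> R u v}. g (fst x) (snd x)) =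
         2 * (\<Sum>P\<in>{P \<in> Vp V. \<exists>u v. P = {u,v} \<and> R u v}. (THE r. \<exists>u v. P = {u,v} \<and> r = g u v))"
proof -
  define T where "T = {(u,v). u\<in>V \<and> v\<in>V \<and> u\<noteq>v \<and> R u v}"
  define Q where "Q = {P \<in> Vp V. \<exists>u v. P = {u,v} \<and> R u v}"
  define h where "h = (\<lambda>x::'a\<times>'a. {fst x, snd x})"
  have finT: "finite T" unfolding T_def
    by (rule finite_subset[of _ "V \<times> V"]) (use fin in auto)
  have hT: "h ` T = Q"
  proof (intro set_eqI iffI)
    fix P assume "P \<in> h ` T"
    then obtain u v where "u\<in>V" "v\<in>V" "u\<noteq>v" "R u v" "P = {u,v}" unfolding T_def h_def by auto
    then show "P \<in> Q" unfolding Q_def Vp_def by auto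
  next
    fix P assume "P \<in> Q"
    then obtain u v where "P = {u,v}" "R u v" "P \<subseteq> V" "card P = 2" unfolding Q_def Vp_def by auto
    then have "(u,v) \<in> T" unfolding T_def by (auto simp: card_2_iff)
    then show "P \<in> h ` T" using \<open>P = {u,v}\<close> unfolding h_def by force
  qed
  have fib: "(\<Sum>x\<in>{x \<in> T. h x = P}. g (fst x) (snd x)) = 2 * (THE r. \<exists>u v. P = {u,v} \<and> r = g u v)"
    if "P \<in> Q" for P
  proof -
    obtain a b where ab: "P = {a,b}" "R a b" "a \<in> V" "b \<in> V" "a \<noteq> b"
    proof -
      from \<open>P \<in> Q\<close> obtain u v where "P = {u,v}" "R u v" "P \<subseteq> V" "card P = 2"
        unfolding Q_def Vp_def by auto
      moreover have "u \<noteq> v" using \<open>card P = 2\<close> \<open>P = {u,v}\<close> by (cases "u = v") auto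
      ultimately show ?thesis using that[of u v] by auto
    qed
    have "{x \<in> T. h x = P} = {(a,b),(b,a)}"
      using ab symR unfolding T_def h_def by (auto simp: doubleton_eq_iff)
    then have "(\<Sum>x\<in>{x \<in> T. h x = P}. g (fst x) (snd x)) = 2 * g a b"
      using ab symg by simp
    moreover have "(THE r. \<exists>u v. P = {u,v} \<and> r = g u v) = g a b"
      using ab symg by (intro the_equality) (auto simp: doubleton_eq_iff)
    ultimately show ?thesis by simp
  qed
  have "(\<Sum>x\<in>T. g (fst x) (snd x)) = (\<Sum>P\<in>h ` T. \<Sum>x\<in>{x \<in> T. h x = P}. g (fst x) (snd x))"
    by (rule sum.image_gen[OF finT])
  also have "\<dots> = (\<Sum>P\<in>Q. 2 * (THE r. \<exists>u v. P = {u,v} \<and> r = g u v))"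
    unfolding hT by (rule sum.cong) (auto simp: fib)
  finally show ?thesis unfolding T_def Q_def by (simp add: sum_distrib_left)
qed



abbreviation "VV n \<equiv> {0..<(n::nat)}"
abbreviation "EE n \<equiv> cycle_adj n"

lemma resolves_sym: "resolves V E x u v = resolves V E x v u"
  unfolding resolves_def by auto

lemma rset_sym: "resolving_set V E u v = resolving_set V E v u"
  unfolding resolving_set_def using resolves_sym by metis

lemma rshare_sym: "resolving_share V E w u v = resolving_share V E w v u"
  unfolding resolving_share_def using resolves_sym rset_sym by metis

definition TT :: "nat \<Rightarrow> nat \<Rightarrow> (nat \<times> nat) set" where
  "TT n w = {(u,v). u \<in> VV n \<and> v \<in> VV n \<and> u \<noteq> v \<and> resolves (VV n) (EE n) w u v}"

lemma avg_eq:
  "avg_resolving_share (VV n) (EE n) w =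
     (\<Sum>x\<in>TT n w. resolving_share (VV n) (EE n) w (fst x) (snd x)) / real (card (TT n w))"
proof -
  define Q where "Q = resolved_pairs (VV n) (EE n) w"
  have s1: "(\<Sum>x\<in>TT n w. resolving_share (VV n) (EE n) w (fst x) (snd x)) =
     2 * (\<Sum>P\<in>Q. (THE r. \<exists>u v. P = {u,v} \<and> r = resolving_share (VV n) (EE n) w u v))"
    unfolding TT_def Q_def resolved_pairs_def
    by (rule pairs_sum) (auto simp: resolves_sym rshare_sym)
  have s2: "(\<Sum>x\<in>TT n w. (\<lambda>_ _. 1::real) (fst x) (snd x)) =
     2 * (\<Sum>P\<in>Q. (THE r. \<exists>u v. P = {u,v} \<and> r = (\<lambda>_ _. 1::real) u v))"
    unfolding TT_def Q_def resolved_pairs_def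
    by (rule pairs_sum) (auto simp: resolves_sym)
  have "(\<Sum>P\<in>Q. (THE r. \<exists>u v. P = {u,v} \<and> r = (1::real))) = (\<Sum>P\<in>Q. 1)"
  proof (rule sum.cong)
    fix P assume "P \<in> Q"
    then obtain u v where "P = {u,v}" unfolding Q_def resolved_pairs_def by auto
    then show "(THE r. \<exists>u v. P = {u,v} \<and> r = (1::real)) = 1" by (intro the_equality) auto
  qed simp
  with s2 have c: "real (card (TT n w)) = 2 * real (card Q)" by simp
  show ?thesis unfolding avg_resolving_share_def Q_def[symmetric] s1 c by simp
qed

lemma rset_card:
  assumes n: "n > 0" and u: "u < n" and v: "v < n" and uv: "u \<noteq> v"
  shows "card (resolving_set (VV n) (EE n) u v) = n - card {x. x < n \<and> int n dvd (int u + int v - 2 * int x)}"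
proof -
  have "resolving_set (VV n) (EE n) u v = VV n - {x. x < n \<and> int n dvd (int u + int v - 2 * int x)}"
    unfolding resolving_set_def using resolves_cycle[OF n _ u v] uv by auto
  moreover have "{x. x < n \<and> int n dvd (int u + int v - 2 * int x)} \<subseteq> VV n" by auto
  ultimately show ?thesis by (simp add: card_Diff_subset)
qed

lemma TT_cycle:
  assumes n: "n > 0" and w: "w < n"
  shows "TT n w = Sigma (VV n) (\<lambda>u. {v. v < n \<and> v \<noteq> u \<and> \<not> int n dvd (int u + int v - 2 * int w)})"
  unfolding TT_def using resolves_cycle[OF n w] by auto

lemma odd_case:
  assumes n3: "n \<ge> 3" and odd: "odd n" and w: "w < n"
  shows "avg_resolving_share (VV n) (EE n) w = 1 / (real n - 1)"
proof -
  have n: "n > 0" using n3 by simp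
  have sh: "resolving_share (VV n) (EE n) w (fst x) (snd x) = 1 / (real n - 1)" if xT: "x \<in> TT n w" for x
  proof -
    obtain u v where x: "x = (u,v)" "u < n" "v < n" "u \<noteq> v" "resolves (VV n) (EE n) w u v"
      using xT unfolding TT_def by (cases x) auto
    have "card (resolving_set (VV n) (EE n) u v) = n - 1"
      using rset_card[OF n x(2,3,4)] card_odd_sol[OF odd, of "int u + int v"] by simp
    then show ?thesis using x n by (simp add: resolving_share_def of_nat_diff)
  qed
  have fin: "finite (TT n w)" unfolding TT_def
    by (rule finite_subset[of _ "VV n \<times> VV n"]) auto
  have "(w, (w + 1) mod n) \<in> TT n w"
  proof -
    have ne: "w \<noteq> (w + 1) mod n"
    proof (cases "w + 1 < n")
      case True then show ?thesis by simp
    next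
      case False then have "w + 1 = n" using w by simp
      then show ?thesis using n3 by auto
    qed
    have "\<not> int n dvd (int w + int ((w + 1) mod n) - 2 * int w)"
    proof (cases "w + 1 < n")
      case True
      then show ?thesis using n3 by (simp add: zdvd_not_zless)
    next
      case False
      then have "w + 1 = n" using w by simp
      then have "int w + int ((w + 1) mod n) - 2 * int w = - (int n - 1)" by simp
      moreover have "\<not> int n dvd (int n - 1)"
      proof
        assume "int n dvd (int n - 1)"
        then have "int n dvd int n - (int n - 1)" using dvd_diff[OF dvd_refl[of "int n"]] by blast
        then show False using n3 by simp
      qed
      ultimately show ?thesis by (metis dvd_minus_iff)
    qed
    then show ?thesis using TT_cycle[OF n w] ne w n by auto
  qed
  then have "card (TT n w) > 0" using fin by (auto simp: card_gt_0_iff)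
  then show ?thesis unfolding avg_eq using sh by simp
qed



lemma even_case:
  assumes nh: "n = 2 * h" and h2: "h \<ge> 2" and w: "w < n"
  shows "avg_resolving_share (VV n) (EE n) w =
     (real h + (real n * (real h - 2) + 2) / (real n - 2)) / (real n * real h + real n * (real h - 2) + 2)"
proof -
  have n: "n > 0" using nh h2 by simp
  have hpos: "h > 0" using h2 by simp
  define C where "C u = {v. v < n \<and> v \<noteq> u \<and> \<not> int n dvd (int u + int v - 2 * int w)}" for u
  define A where "A u = {v. v < n \<and> odd (u + v)}" for u
  define B where "B u = {v. v < n \<and> even (u + v) \<and> v \<noteq> u \<and> \<not> int n dvd (int u + int v - 2 * int w)}" for u
  define S where "S = {u. u < n \<and> int n dvd (2 * int u - 2 * int w)}"
  have TT: "TT n w = Sigma (VV n) C" unfolding C_def by (rule TT_cycle[OF n w])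
  have evn: "even n" using nh by simp
  have CAB: "C u = A u \<union> B u" and ABdisj: "A u \<inter> B u = {}" for u
  proof -
    have "\<not> int n dvd (int u + int v - 2 * int w)" if "odd (u + v)" for v
    proof
      assume "int n dvd (int u + int v - 2 * int w)"
      moreover have "2 dvd int n" using evn by simp
      ultimately have "2 dvd (int u + int v - 2 * int w)" by (rule dvd_trans[rotated])
      then show False using that by (simp flip: of_nat_add)
    qed
    then show "C u = A u \<union> B u" unfolding C_def A_def B_def by auto
    show "A u \<inter> B u = {}" unfolding A_def B_def by auto
  qed
  have finA: "finite (A u)" and finB: "finite (B u)" for u unfolding A_def B_def by auto
  have cardA: "card (A u) = h" for u
  proof (cases "even u")
    case True
    then have "A u = {v. v < 2 * h \<and> odd v}" unfolding A_def nh by auto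
    then show ?thesis by (simp add: card_odds)
  next
    case False
    then have "A u = {v. v < 2 * h \<and> even v}" unfolding A_def nh by auto
    then show ?thesis by (simp add: card_evens)
  qed
  have cardB: "real (card (B u)) = real h - 2 + (if u \<in> S then 1 else 0)" if u: "u < n" for u
  proof -
    define E where "E = {v. v < n \<and> even (u + v) \<and> v \<noteq> u}"
    define D where "D = {v. v < n \<and> v \<noteq> u \<and> int n dvd (int u + int v - 2 * int w)}"
    define D0 where "D0 = {v. v < n \<and> int n dvd (int u + int v - 2 * int w)}"
    have BED: "B u = E - D" unfolding B_def E_def D_def by auto
    have DE: "D \<subseteq> E"
    proof
      fix v assume "v \<in> D"
      then have v: "v < n" "v \<noteq> u" "int n dvd (int u + int v - 2 * int w)" unfolding D_def by auto
      have "2 dvd int n" using evn by simp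
      then have "2 dvd (int u + int v - 2 * int w)" using v(3) by (rule dvd_trans)
      then have "even (u + v)" by (simp flip: of_nat_add)
      then show "v \<in> E" using v unfolding E_def by auto
    qed
    have cE: "card E = h - 1"
    proof -
      have "{v. v < n \<and> even (u + v)} = (if even u then {v. v < 2 * h \<and> even v} else {v. v < 2 * h \<and> odd v})"
        unfolding nh by auto
      then have c0: "card {v. v < n \<and> even (u + v)} = h" by (simp add: card_evens card_odds)
      have "E = {v. v < n \<and> even (u + v)} - {u}" unfolding E_def by auto
      then show ?thesis using c0 u by (simp add: card_Diff_singleton)
    qed
    have cD0: "card D0 = 1" unfolding D0_def
      using card_unique_v[OF n, of "int u - 2 * int w"] by (simp add: algebra_simps)
    have uD0: "u \<in> D0 \<longleftrightarrow> u \<in> S" unfolding D0_def S_def using u by (simp add: algebra_simps)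
    have "D = D0 - {u}" unfolding D_def D0_def by auto
    then have cD: "real (card D) = 1 - (if u \<in> S then 1 else 0)"
      using cD0 uD0 by (auto simp: card_Diff_singleton)
    have "card (B u) = card E - card D" unfolding BED using DE finB
      by (intro card_Diff_subset) (auto simp: D_def)
    then have "real (card (B u)) = real (card E) - real (card D)"
      using DE by (simp add: of_nat_diff card_mono E_def)
    then show ?thesis using cD cE h2 by (simp add: of_nat_diff)
  qed
  have cardS: "card S = 2"
  proof -
    have "S = {x. x < n \<and> int n dvd (2 * int w - 2 * int x)}"
      unfolding S_def by (metis dvd_diff_commute)
    then show ?thesis using card_even_sol[OF nh hpos, of w] by simp
  qed
  have sumI: "(\<Sum>u\<in>VV n. (if u \<in> S then 1 else 0 :: real)) = 2"
  proof -
    have "(\<Sum>u\<in>VV n. (if u \<in> S then 1 else 0 :: real)) = (\<Sum>u\<in>{u \<in> VV n. u \<in> S}. 1)"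
      using sum.inter_filter[of "VV n" "\<lambda>_. 1::real" "\<lambda>u. u \<in> S"] by simp
    also have "{u \<in> VV n. u \<in> S} = S" unfolding S_def by auto
    finally show ?thesis using cardS by simp
  qed
  have sumB: "(\<Sum>u\<in>VV n. real (card (B u))) = real n * (real h - 2) + 2"
  proof -
    have "(\<Sum>u\<in>VV n. real (card (B u))) = (\<Sum>u\<in>VV n. (real h - 2) + (if u \<in> S then 1 else 0))"
      by (rule sum.cong) (auto simp: cardB)
    also have "\<dots> = real n * (real h - 2) + 2" by (simp add: sum.distrib sumI)
    finally show ?thesis .
  qed
  have shA: "resolving_share (VV n) (EE n) w u v = 1 / real n" if "u < n" "v \<in> A u" for u v
  proof -
    have v: "v < n" "odd (u + v)" using that unfolding A_def by auto
    then have uv: "u \<noteq> v" by auto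
    have res: "resolves (VV n) (EE n) w u v" using v(1) CAB[of u] that unfolding C_def
      using resolves_cycle[OF n w that(1) v(1)] by auto
    have e0: "{x. x < n \<and> int n dvd (int u + int v - 2 * int x)} = {}"
      by (rule no_odd_sol[OF evn]) (use v(2) in \<open>simp flip: of_nat_add\<close>)
    have "card (resolving_set (VV n) (EE n) u v) = n" unfolding rset_card[OF n that(1) v(1) uv] e0 by simp
    then show ?thesis using res by (simp add: resolving_share_def)
  qed
  have shB: "resolving_share (VV n) (EE n) w u v = 1 / (real n - 2)" if "u < n" "v \<in> B u" for u v
  proof -
    have v: "v < n" "even (u + v)" "v \<noteq> u" using that unfolding B_def by auto
    have res: "resolves (VV n) (EE n) w u v" using CAB[of u] that unfolding C_def
      using resolves_cycle[OF n w that(1) v(1)] by auto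
    define m where "m = (u + v) div 2"
    have m: "u + v = 2 * m" unfolding m_def using v(2) by simp
    have "int u + int v = 2 * int m" using m by (metis of_nat_add of_nat_mult of_nat_numeral)
    then have "card {x. x < n \<and> int n dvd (int u + int v - 2 * int x)} = 2"
      using card_even_sol[OF nh hpos, of m] by simp
    then have "card (resolving_set (VV n) (EE n) u v) = n - 2" using rset_card[OF n that(1) v(1)] v(3) by simp
    then show ?thesis using res h2 nh by (simp add: resolving_share_def of_nat_diff)
  qed
  have inner: "(\<Sum>v\<in>C u. resolving_share (VV n) (EE n) w u v) = real h / real n + real (card (B u)) / (real n - 2)"
    if u: "u < n" for u
  proof -
    have "(\<Sum>v\<in>C u. resolving_share (VV n) (EE n) w u v) =
          (\<Sum>v\<in>A u. resolving_share (VV n) (EE n) w u v) + (\<Sum>v\<in>B u. resolving_share (VV n) (EE n) w u v)"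
      unfolding CAB using ABdisj finA finB by (simp add: sum.union_disjoint)
    also have "\<dots> = (\<Sum>v\<in>A u. 1 / real n) + (\<Sum>v\<in>B u. 1 / (real n - 2))"
      using shA[OF u] shB[OF u] by simp
    also have "\<dots> = real h / real n + real (card (B u)) / (real n - 2)" using cardA by simp
    finally show ?thesis .
  qed
  have finC: "finite (C u)" for u unfolding C_def by auto
  have sumT: "(\<Sum>x\<in>TT n w. resolving_share (VV n) (EE n) w (fst x) (snd x)) =
      real h + (real n * (real h - 2) + 2) / (real n - 2)"
  proof -
    have "(\<Sum>x\<in>TT n w. resolving_share (VV n) (EE n) w (fst x) (snd x)) =
          (\<Sum>u\<in>VV n. \<Sum>v\<in>C u. resolving_share (VV n) (EE n) w u v)"
      unfolding TT using finC by (simp add: sum.Sigma split_def)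
    also have "\<dots> = (\<Sum>u\<in>VV n. real h / real n + real (card (B u)) / (real n - 2))"
      by (rule sum.cong) (auto simp: inner)
    also have "\<dots> = real n * (real h / real n) + (\<Sum>u\<in>VV n. real (card (B u))) / (real n - 2)"
      by (simp add: sum.distrib sum_divide_distrib)
    also have "\<dots> = real h + (real n * (real h - 2) + 2) / (real n - 2)" using n sumB by simp
    finally show ?thesis .
  qed
  have cardT: "real (card (TT n w)) = real n * real h + real n * (real h - 2) + 2"
  proof -
    have "card (TT n w) = (\<Sum>u\<in>VV n. card (C u))" unfolding TT using finC by simp
    also have "\<dots> = (\<Sum>u\<in>VV n. h + card (B u))"
      by (rule sum.cong) (auto simp: CAB card_Un_disjoint[OF finA finB ABdisj] cardA)
    finally have "real (card (TT n w)) = (\<Sum>u\<in>VV n. real h + real (card (B u)))" by simp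
    also have "\<dots> = real n * real h + (\<Sum>u\<in>VV n. real (card (B u)))" by (simp add: sum.distrib)
    finally show ?thesis using sumB by simp
  qed
  show ?thesis unfolding avg_eq sumT cardT ..
qed



theorem theorem3p8:
  fixes n :: nat
  assumes "n \<ge> 3"
  shows "resolving_index {0..<n} (cycle_adj n) =
           (if even n then real n * (real n - 1) / ((real n)^2 - 2 * real n + 2)
            else real n / (real n - 1))"
proof (cases "even n")
  case False
  have "resolving_index {0..<n} (cycle_adj n) = (\<Sum>w\<in>{0..<n}. 1 / (real n - 1))"
    unfolding resolving_index_def by (rule sum.cong) (auto simp: odd_case[OF assms False])
  then show ?thesis using False by simp
next
  case True
  then obtain h where nh: "n = 2 * h" by (auto elim: evenE)
  have h2: "h \<ge> 2" using assms nh by simp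
  define a where "a = (real h + (real n * (real h - 2) + 2) / (real n - 2)) / (real n * real h + real n * (real h - 2) + 2)"
  have "resolving_index {0..<n} (cycle_adj n) = (\<Sum>w\<in>{0..<n}. a)"
    unfolding resolving_index_def a_def by (rule sum.cong) (auto simp: even_case[OF nh h2])
  also have "\<dots> = real n * a" by simp
  also have "\<dots> = real n * (real n - 1) / ((real n)^2 - 2 * real n + 2)"
  proof -
    have rn: "real n = 2 * real h" using nh by simp
    have d1: "real n - 2 \<noteq> 0" using h2 rn by simp
    have "real n * (real h - 2) + 2 = (real h - 1) * (real n - 2)" unfolding rn by (simp add: algebra_simps)
    then have f1: "(real n * (real h - 2) + 2) / (real n - 2) = real h - 1" using d1 by simp
    have f2: "real n * real h + real n * (real h - 2) + 2 = (real n)^2 - 2 * real n + 2"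
      unfolding rn by (simp add: algebra_simps power2_eq_square)
    have f3: "real h + (real h - 1) = real n - 1" unfolding rn by simp
    have "a = (real n - 1) / ((real n)^2 - 2 * real n + 2)" unfolding a_def f1 f2 f3 ..
    then show ?thesis by simp
  qed
  finally show ?thesis using True by simp
qed


end
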